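(* Let $G$ be a finite connected graph. For any integers $0 \le f < n$, there exists an $f$-resilient synchronous message-passing algorithm for $n$ processes that solves graphical approximate agreement on $G$ in $\lfloor f/2 \rfloor + \lceil \log_2 \mathrm{diam}(G) \rceil + 1$ rounds.
   Context: Graphical approximate agreement on $G$: each process receives an input vertex and each non-crashed process outputs a vertex such that any two outputs are equal or adjacent in $G$ and every output lies on a shortest path in $G$ between two (not necessarily distinct) inputs. $\mathrm{diam}(G)$ is the maximum distance between two vertices of $G$. Synchronous message-passing model: $n$ fully connected processes, computation in synchronous rounds; in each round every process sends its entire state to every other process and messages from non-faulty processes arrive within the round; processes may crash. An $f$-resilient solution using $T$ rounds: in every execution with at most $f$ crashes, all non-crashed processes decide valid outputs by the end of round $T$. *)

theory Defs
  imports Main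
begin

definition finite_connected_graph :: "'v set \<Rightarrow> ('v \<Rightarrow> 'v \<Rightarrow> bool) \<Rightarrow> bool" where
  "finite_connected_graph V E \<longleftrightarrow>
     finite V \<and> V \<noteq> {} \<and>
     (\<forall>u v. E u v \<longrightarrow> u \<in> V \<and> v \<in> V) \<and>
     (\<forall>u v. E u v \<longrightarrow> E v u) \<and>
     (\<forall>u. \<not> E u u) \<and>
     (\<forall>u\<in>V. \<forall>v\<in>V. \<exists>k w. w 0 = u \<and> w k = v \<and> (\<forall>i<k. E (w i) (w (Suc i))))"

definition is_walk :: "('v \<Rightarrow> 'v \<Rightarrow> bool) \<Rightarrow> 'v \<Rightarrow> 'v \<Rightarrow> nat \<Rightarrow> bool" where
  "is_walk E u v k \<longleftrightarrow> (\<exists>w::nat \<Rightarrow> 'v. w 0 = u \<and> w k = v \<and> (\<forall>i<k. E (w i) (w (Suc i))))"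

definition gdist :: "('v \<Rightarrow> 'v \<Rightarrow> bool) \<Rightarrow> 'v \<Rightarrow> 'v \<Rightarrow> nat" where
  "gdist E u v = (LEAST k. is_walk E u v k)"

definition diam :: "'v set \<Rightarrow> ('v \<Rightarrow> 'v \<Rightarrow> bool) \<Rightarrow> nat" where
  "diam V E = Max {gdist E u v | u v. u \<in> V \<and> v \<in> V}"

definition on_shortest_path :: "('v \<Rightarrow> 'v \<Rightarrow> bool) \<Rightarrow> 'v \<Rightarrow> 'v \<Rightarrow> 'v \<Rightarrow> bool" where
  "on_shortest_path E a b y \<longleftrightarrow> gdist E a y + gdist E y b = gdist E a b"

text \<open>Ceiling of log base 2 on naturals: least k with d \<le> 2^k
  (equals ceil(log2 d) for d \<ge> 1; 0 for d = 0).\<close>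
definition clog2 :: "nat \<Rightarrow> nat" where
  "clog2 d = (LEAST k. d \<le> 2 ^ k)"

text \<open>Local view (full-information state) of a process: initial state is
  (process id, input); after a round it is (previous state, list of
  messages received from processes 0..n-1, None = nothing received).\<close>
datatype 'v view = V0 nat 'v | VS "'v view" "'v view option list"

text \<open>Failure pattern: crash j = None means j never crashes; crash j = Some r
  means j crashes in round r: it sends normally in rounds < r, in round r its
  message reaches exactly the processes i with dlv j i, and it sends nothing
  afterwards.\<close>
definition sends :: "(nat \<Rightarrow> nat option) \<Rightarrow> (nat \<Rightarrow> nat \<Rightarrow> bool) \<Rightarrow> nat \<Rightarrow> nat \<Rightarrow> nat \<Rightarrow> bool" where
  "sends crash dlv r j i \<longleftrightarrow>
     (case crash j of None \<Rightarrow> True | Some c \<Rightarrow> r < c \<or> (r = c \<and> dlv j i))"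

primrec view_at :: "nat \<Rightarrow> (nat \<Rightarrow> 'v) \<Rightarrow> (nat \<Rightarrow> nat option) \<Rightarrow> (nat \<Rightarrow> nat \<Rightarrow> bool)
                     \<Rightarrow> nat \<Rightarrow> nat \<Rightarrow> 'v view" where
  "view_at n x crash dlv 0 i = V0 i (x i)"
| "view_at n x crash dlv (Suc r) i =
     VS (view_at n x crash dlv r i)
        (map (\<lambda>j. if sends crash dlv (Suc r) j i then Some (view_at n x crash dlv r j) else None)
             [0..<n])"

text \<open>A deterministic algorithm deciding at the end of round T is a decision map
  on full-information views after T rounds (every algorithm in this model is
  simulated by the full-information protocol).\<close>
definition solves_GAA :: "'v set \<Rightarrow> ('v \<Rightarrow> 'v \<Rightarrow> bool) \<Rightarrow> nat \<Rightarrow> nat \<Rightarrow> nat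
                          \<Rightarrow> ('v view \<Rightarrow> 'v) \<Rightarrow> bool" where
  "solves_GAA V E n f T dec \<longleftrightarrow>
     (\<forall>(x::nat \<Rightarrow> 'v) crash dlv.
        (\<forall>j<n. x j \<in> V) \<and> card {j. j < n \<and> crash j \<noteq> None} \<le> f \<longrightarrow>
        (let out = (\<lambda>i. dec (view_at n x crash dlv T i));
             correct = {i. i < n \<and> crash i = None}
         in (\<forall>i\<in>correct. out i \<in> V) \<and>
            (\<forall>i\<in>correct. \<forall>i'\<in>correct. out i = out i' \<or> E (out i) (out i')) \<and>
            (\<forall>i\<in>correct. \<exists>a<n. \<exists>b<n. on_shortest_path E (x a) (x b) (out i))))"

end

theory Submission
  imports Defs Complex_Main
begin

primrec depth :: "'v view \<Rightarrow> nat" where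
 "depth (V0 i a) = 0" | "depth (VS v ms) = Suc (depth v)"
definition coord :: "nat set \<Rightarrow> nat set \<times> real \<Rightarrow> real" where
 "coord W' s = (if 2 \<le> card (fst s) then snd s else if Min (fst s) = Min W' then 0 else 1)"
definition stepS :: "nat \<Rightarrow> nat \<Rightarrow> (nat set \<times> real) set \<Rightarrow> nat set \<times> real" where
 "stepS R1 r S = (if r < R1 then ({Min (\<Union>(fst ` S))}, 0)
    else (let W' = \<Union>(fst ` S); C = coord W' ` S in (W', (Min C + Max C)/2)))"
primrec run :: "('v \<Rightarrow> nat) \<Rightarrow> nat \<Rightarrow> 'v view \<Rightarrow> nat set \<times> real" where
  "run idx R1 (V0 i a) = ({idx a}, 0)"
| "run idx R1 (VS v ms) = stepS R1 (depth v) {s. Some s \<in> set (map (map_option (run idx R1)) ms)}"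

lemma depth_view: "depth (view_at n x crash dlv r i) = r"
  by (induction r arbitrary: i) auto

lemma run_Suc: "run idx R1 (view_at n x crash dlv (Suc r) i) =
  stepS R1 r ((\<lambda>j. run idx R1 (view_at n x crash dlv r j)) ` {j. j<n \<and> sends crash dlv (Suc r) j i})"
proof -
  have "{s. Some s \<in> set (map (map_option (run idx R1)) (map (\<lambda>j. if sends crash dlv (Suc r) j i then Some (view_at n x crash dlv r j) else None) [0..<n]))}
     = (\<lambda>j. run idx R1 (view_at n x crash dlv r j)) ` {j. j<n \<and> sends crash dlv (Suc r) j i}"
    by (auto split: if_splits)
  then show ?thesis by (simp add: depth_view)
qed

lemma walk_exists:
  assumes "finite_connected_graph V E" "u \<in> V" "v \<in> V" shows "\<exists>k. is_walk E u v k"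
  using assms unfolding finite_connected_graph_def is_walk_def by blast

lemma gdist_walk:
  assumes "finite_connected_graph V E" "u \<in> V" "v \<in> V" shows "is_walk E u v (gdist E u v)"
  using walk_exists[OF assms] unfolding gdist_def by (rule LeastI_ex)

lemma gdist_le: "is_walk E u v k \<Longrightarrow> gdist E u v \<le> k"
  unfolding gdist_def by (rule Least_le)

lemma walk_append:
  assumes "is_walk E a b k" "is_walk E b c l" shows "is_walk E a c (k+l)"
proof -
  obtain w1 where w1: "w1 0 = a" "w1 k = b" "\<forall>i<k. E (w1 i) (w1 (Suc i))"
    using assms(1) unfolding is_walk_def by blast
  obtain w2 where w2: "w2 0 = b" "w2 l = c" "\<forall>i<l. E (w2 i) (w2 (Suc i))"
    using assms(2) unfolding is_walk_def by blast
  define w where "w i = (if i \<le> k then w1 i else w2 (i - k))" for i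
  have "\<forall>i<k+l. E (w i) (w (Suc i))"
  proof (intro allI impI)
    fix i assume i: "i < k + l"
    show "E (w i) (w (Suc i))"
    proof (cases "i < k")
      case True then show ?thesis using w1 by (auto simp: w_def)
    next
      case False
      then have "i - k < l" "Suc i - k = Suc (i - k)" using i by auto
      then show ?thesis using w2 False w1(2) by (auto simp: w_def)
    qed
  qed
  moreover have "w 0 = a" "w (k+l) = c" using w1 w2 by (auto simp: w_def)
  ultimately show ?thesis unfolding is_walk_def by blast
qed

lemma gdist_tri:
  assumes "finite_connected_graph V E" "a \<in> V" "b \<in> V" "c \<in> V"
  shows "gdist E a c \<le> gdist E a b + gdist E b c"
  using gdist_le[OF walk_append[OF gdist_walk[OF assms(1,2,3)] gdist_walk[OF assms(1,3,4)]]] .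

definition pth :: "('v \<Rightarrow> 'v \<Rightarrow> bool) \<Rightarrow> 'v \<Rightarrow> 'v \<Rightarrow> nat \<Rightarrow> 'v" where
  "pth E u v = (SOME w. w 0 = u \<and> w (gdist E u v) = v \<and> (\<forall>i<gdist E u v. E (w i) (w (Suc i))))"

lemma pth_props:
  assumes "finite_connected_graph V E" "u \<in> V" "v \<in> V"
  shows "pth E u v 0 = u \<and> pth E u v (gdist E u v) = v \<and> (\<forall>i<gdist E u v. E (pth E u v i) (pth E u v (Suc i)))"
proof -
  have "\<exists>w. w 0 = u \<and> w (gdist E u v) = v \<and> (\<forall>i<gdist E u v. E (w i) (w (Suc i)))"
    using gdist_walk[OF assms] unfolding is_walk_def .
  then show ?thesis unfolding pth_def by (rule someI_ex)
qed

lemma gdist_self: "gdist E u u = 0"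
proof -
  have "is_walk E u u 0" unfolding is_walk_def by auto
  then show ?thesis using gdist_le by fastforce
qed

lemma pth_in_V:
  assumes G: "finite_connected_graph V E" and "u \<in> V" "v \<in> V" "k \<le> gdist E u v"
  shows "pth E u v k \<in> V"
proof (cases k)
  case 0 then show ?thesis using pth_props[OF assms(1-3)] assms by auto
next
  case (Suc k')
  then have "E (pth E u v k') (pth E u v k)" using pth_props[OF assms(1-3)] assms(4) by auto
  then show ?thesis using G unfolding finite_connected_graph_def by blast
qed

lemma pth_short:
  assumes G: "finite_connected_graph V E" and uv: "u \<in> V" "v \<in> V" and k: "k \<le> gdist E u v"
  shows "gdist E u (pth E u v k) + gdist E (pth E u v k) v = gdist E u v"
proof -
  let ?p = "pth E u v" and ?D = "gdist E u v"
  note P = pth_props[OF G uv]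
  have "is_walk E u (?p k) k" unfolding is_walk_def using P k
    by (intro exI[of _ ?p]) auto
  then have 1: "gdist E u (?p k) \<le> k" by (rule gdist_le)
  have "is_walk E (?p k) v (?D - k)" unfolding is_walk_def using P k
    by (intro exI[of _ "\<lambda>i. ?p (k + i)"]) auto
  then have 2: "gdist E (?p k) v \<le> ?D - k" by (rule gdist_le)
  have 3: "?D \<le> gdist E u (?p k) + gdist E (?p k) v"
    using gdist_tri[OF G uv(1) pth_in_V[OF G uv k] uv(2)] .
  show ?thesis using 1 2 3 k by linarith
qed

lemma pth_adj:
  assumes G: "finite_connected_graph V E" and uv: "u \<in> V" "v \<in> V"
    and k: "k \<le> gdist E u v" "k' \<le> gdist E u v" "k \<le> k' + 1" "k' \<le> k + 1"
  shows "pth E u v k = pth E u v k' \<or> E (pth E u v k) (pth E u v k')"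
proof -
  note P = pth_props[OF G uv]
  have sym: "\<And>a b. E a b \<Longrightarrow> E b a" using G unfolding finite_connected_graph_def by blast
  consider "k = k'" | "k' = Suc k" | "k = Suc k'" using k by linarith
  then show ?thesis
  proof cases
    case 2 then show ?thesis using P k by auto
  next
    case 3 then show ?thesis using P k sym by auto
  qed auto
qed

lemma diam_ge:
  assumes G: "finite_connected_graph V E" and "u \<in> V" "v \<in> V"
  shows "gdist E u v \<le> diam V E"
proof -
  have "{gdist E u v | u v. u \<in> V \<and> v \<in> V} = (\<lambda>(u,v). gdist E u v) ` (V \<times> V)" by auto
  moreover have "finite V" using G unfolding finite_connected_graph_def by auto
  ultimately have "finite {gdist E u v | u v. u \<in> V \<and> v \<in> V}" by simp
  then show ?thesis unfolding diam_def using assms by (intro Max_ge) auto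
qed

lemma clog2_ge: "d \<le> 2 ^ clog2 d"
proof -
  have "d < 2 ^ d" by (rule less_exp)
  then have "d \<le> 2 ^ d" by simp
  then show ?thesis unfolding clog2_def by (rule LeastI)
qed

lemma floor_close:
  fixes a b :: real assumes "\<bar>a - b\<bar> \<le> 1" "0 \<le> a" "0 \<le> b"
  shows "nat \<lfloor>a\<rfloor> \<le> nat \<lfloor>b\<rfloor> + 1"
proof -
  have "\<lfloor>a\<rfloor> \<le> \<lfloor>b + 1\<rfloor>" using assms by (intro floor_mono) auto
  then show ?thesis using assms by auto
qed

lemma mid_bounds:
  fixes G :: "real set"
  assumes "finite G" "g0 \<in> G" "\<forall>g\<in>G. L \<le> g \<and> g \<le> L + w"
  shows "(L + g0)/2 \<le> (Min G + Max G)/2 \<and> (Min G + Max G)/2 \<le> (g0 + (L + w))/2"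
proof -
  have "Min G \<le> g0" "g0 \<le> Max G" using assms by auto
  moreover have "L \<le> Min G" "Max G \<le> L + w" using assms by (auto intro: Min.boundedI Max.boundedI)
  ultimately show ?thesis by auto
qed

lemma pigeon:
  fixes n :: nat and crash :: "nat \<Rightarrow> nat option"
  assumes "card {j. j < n \<and> crash j \<noteq> None} \<le> f" "f < 2 * R"
  shows "\<exists>q<R. card {j. j < n \<and> crash j = Some (Suc q)} \<le> 1"
proof (rule ccontr)
  assume "\<not> ?thesis"
  then have ge: "\<forall>q<R. 2 \<le> card {j. j < n \<and> crash j = Some (Suc q)}" by auto
  let ?A = "\<lambda>q. {j. j < n \<and> crash j = Some (Suc q)}"
  have fin: "finite (?A q)" for q by auto
  have "card (\<Union>q\<in>{..<R}. ?A q) = (\<Sum>q<R. card (?A q))"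
    by (rule card_UN_disjoint) (auto simp: fin)
  also have "\<dots> \<ge> (\<Sum>q<R. 2)" using ge by (intro sum_mono) auto
  finally have "2 * R \<le> card (\<Union>q\<in>{..<R}. ?A q)" by simp
  also have "\<dots> \<le> card {j. j < n \<and> crash j \<noteq> None}" by (intro card_mono) auto
  finally show False using assms by linarith
qed




locale ex =
  fixes V :: "'v set" and E :: "'v \<Rightarrow> 'v \<Rightarrow> bool" and n f :: nat and x :: "nat \<Rightarrow> 'v" and crash :: "nat \<Rightarrow> nat option" and dlv :: "nat \<Rightarrow> nat \<Rightarrow> bool" and idx :: "'v \<Rightarrow> nat"
  assumes G: "finite_connected_graph V E" and fn: "f < n" and inp: "\<forall>j<n. x j \<in> V"
    and cr: "card {j. j < n \<and> crash j \<noteq> None} \<le> f" and inj: "inj_on idx V"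
begin

definition "R1 = f div 2 + 1"
definition "st r i = run idx R1 (view_at n x crash dlv r i)"
definition "Snd r i = {j. j < n \<and> sends crash dlv (Suc r) j i}"

lemma st_Suc: "st (Suc r) i = stepS R1 r (st r ` Snd r i)"
  unfolding st_def Snd_def by (rule run_Suc)

lemma ex_correct: "\<exists>c0<n. crash c0 = None"
proof (rule ccontr)
  assume "\<not> ?thesis"
  then have "{j. j < n \<and> crash j \<noteq> None} = {..<n}" by auto
  then show False using cr fn by simp
qed

lemma Snd_corr: "c < n \<Longrightarrow> crash c = None \<Longrightarrow> c \<in> Snd r i"
  unfolding Snd_def sends_def by auto

lemma Snd_sub: "Snd r i \<subseteq> {..<n}" unfolding Snd_def by auto
lemma Snd_fin: "finite (Snd r i)" using Snd_sub finite_subset by blast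
lemma Snd_ne: "Snd r i \<noteq> {}" using ex_correct Snd_corr by blast

definition "val r j = Min (fst (st r j))"

lemma ph1: "r \<le> R1 \<Longrightarrow> j < n \<Longrightarrow> st r j = ({val r j}, 0) \<and> val r j \<in> idx ` x ` {..<n}"
proof (induction r arbitrary: j)
  case 0
  then show ?case by (simp add: st_def val_def)
next
  case (Suc r)
  have inS: "j' < n" if "j' \<in> Snd r i" for j' i using Snd_sub that by blast
  have IH: "st r j' = ({val r j'}, 0) \<and> val r j' \<in> idx ` x ` {..<n}" if "j' < n" for j'
    using Suc.IH Suc.prems that by auto
  have U: "\<Union>(fst ` st r ` Snd r j) = val r ` Snd r j"
  proof -
    have "fst (st r j') = {val r j'}" if "j' \<in> Snd r j" for j' using IH[OF inS[OF that]] by simp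
    then show ?thesis by auto
  qed
  have "r < R1" using Suc by auto
  then have st1: "st (Suc r) j = ({Min (val r ` Snd r j)}, 0)" by (simp only: st_Suc stepS_def if_True U)
  have "Min (val r ` Snd r j) \<in> val r ` Snd r j"
    using Snd_fin Snd_ne by (intro Min_in) auto
  then obtain j' where j': "j' \<in> Snd r j" "Min (val r ` Snd r j) = val r j'" by auto
  have M: "Min (val r ` Snd r j) \<in> idx ` x ` {..<n}" using j' IH[OF inS[OF j'(1)]] by simp
  have v: "val (Suc r) j = Min (val r ` Snd r j)" unfolding val_def[of "Suc r"] st1 by simp
  show ?case using st1 v M by simp
qed

lemma val_Suc: "r < R1 \<Longrightarrow> val (Suc r) j = Min (val r ` Snd r j)"
proof -
  assume r: "r < R1"
  have "fst (st r j') = {val r j'}" if "j' \<in> Snd r j" for j'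
    using ph1[of r j'] r subsetD[OF Snd_sub that] by auto
  then have "\<Union>(fst ` st r ` Snd r j) = val r ` Snd r j" by auto
  then show ?thesis using r unfolding val_def[of "Suc r"] by (simp add: st_Suc stepS_def)
qed

end



context ex begin
lemma good_round: "\<exists>q p. q < R1 \<and> p < n \<and> {j. j < n \<and> crash j = Some (Suc q)} \<subseteq> {p}"
proof -
  have "f < 2 * R1" unfolding R1_def by presburger
  from pigeon[OF cr this] obtain q where q: "q < R1" "card {j. j < n \<and> crash j = Some (Suc q)} \<le> 1" by blast
  let ?A = "{j. j < n \<and> crash j = Some (Suc q)}"
  have fin: "finite ?A" by auto
  show ?thesis
  proof (cases "?A = {}")
    case True then show ?thesis using q ex_correct by blast
  next
    case False
    then obtain p where p: "p \<in> ?A" by blast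
    have "\<forall>a\<in>?A. \<forall>b\<in>?A. a = b" using q(2) fin card_le_Suc0_iff_eq[OF fin] by auto
    then have "?A \<subseteq> {p}" using p by blast
    then show ?thesis using q p by blast
  qed
qed
end

locale ex2 = ex +
  fixes q p assumes qR: "q < R1" and pn: "p < n" and good: "{j. j < n \<and> crash j = Some (Suc q)} \<subseteq> {p}"
begin

definition "S0 = {j. j < n \<and> (crash j = None \<or> (\<exists>c. crash j = Some c \<and> Suc q < c))}"
definition "m2 = Min (val q ` S0)"
definition "m1 = min m2 (val q p)"

lemma S0_Snd: "S0 \<subseteq> Snd q i"
  unfolding S0_def Snd_def sends_def by auto

lemma Snd_S0: "Snd q i \<subseteq> insert p S0"
proof
  fix j assume j: "j \<in> Snd q i"
  then have jn: "j < n" and s: "sends crash dlv (Suc q) j i" unfolding Snd_def by auto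
  show "j \<in> insert p S0"
  proof (cases "crash j")
    case None then show ?thesis using jn unfolding S0_def by auto
  next
    case (Some c)
    then have "Suc q < c \<or> c = Suc q" using s unfolding sends_def by auto
    then show ?thesis using Some jn good unfolding S0_def by auto
  qed
qed

lemma S0_fin: "finite S0" unfolding S0_def by auto
lemma S0_ne: "S0 \<noteq> {}" using ex_correct unfolding S0_def by auto

lemma val_good: "val (Suc q) i \<in> {m1, m2}"
proof -
  have v: "val (Suc q) i = Min (val q ` Snd q i)" using val_Suc qR by blast
  have "Snd q i = S0 \<or> Snd q i = insert p S0" using S0_Snd[of i] Snd_S0[of i] by blast
  then show ?thesis
  proof
    assume "Snd q i = S0" then show ?thesis using v m2_def by simp
  next
    assume "Snd q i = insert p S0"
    then have "val (Suc q) i = min (val q p) m2" using v S0_fin S0_ne by (simp add: m2_def)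
    then show ?thesis unfolding m1_def by (simp add: min.commute)
  qed
qed

lemma val_two: "Suc q \<le> r \<Longrightarrow> r \<le> R1 \<longrightarrow> val r i \<in> {m1, m2}"
proof (induction r arbitrary: i rule: dec_induct)
  case base then show ?case using val_good by blast
next
  case (step r)
  show ?case
  proof
    assume r: "Suc r \<le> R1"
    then have v: "val (Suc r) i = Min (val r ` Snd r i)" using val_Suc by simp
    have "Min (val r ` Snd r i) \<in> val r ` Snd r i" using Snd_fin Snd_ne by (intro Min_in) auto
    moreover have "val r ` Snd r i \<subseteq> {m1, m2}" using step.IH r by auto
    ultimately show "val (Suc r) i \<in> {m1, m2}" using v by auto
  qed
qed

lemma val_inp: "j < n \<Longrightarrow> val q j \<in> idx ` x ` {..<n}"
  using ph1[of q j] qR by simp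

lemma m_inputs: "m1 \<in> idx ` x ` {..<n}" "m2 \<in> idx ` x ` {..<n}"
proof -
  have "m2 \<in> val q ` S0" unfolding m2_def using S0_fin S0_ne by (intro Min_in) auto
  then obtain j where j: "j \<in> S0" "m2 = val q j" by blast
  then have "j < n" unfolding S0_def by simp
  then show m2: "m2 \<in> idx ` x ` {..<n}" using j val_inp by simp
  have "val q p \<in> idx ` x ` {..<n}" using val_inp pn by simp
  then show "m1 \<in> idx ` x ` {..<n}" using m2 unfolding m1_def min_def by simp
qed

lemma m12: "m1 \<le> m2" unfolding m1_def by simp

definition gc :: "nat set \<times> real \<Rightarrow> real" where
  "gc s = (if 2 \<le> card (fst s) then snd s else if Min (fst s) = m1 then 0 else 1)"

definition "good_st s \<longleftrightarrow> fst s \<subseteq> {m1, m2} \<and> fst s \<noteq> {} \<and> 0 \<le> gc s \<and> gc s \<le> 1"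

lemma stepS2: "R1 \<le> r \<Longrightarrow> stepS R1 r S = (\<Union>(fst ` S), (Min (coord (\<Union>(fst ` S)) ` S) + Max (coord (\<Union>(fst ` S)) ` S))/2)"
  unfolding stepS_def Let_def by simp

lemma step2:
  assumes r: "R1 \<le> r" and S: "finite S" "S \<noteq> {}" "\<forall>s\<in>S. good_st s"
  shows "good_st (stepS R1 r S) \<and> gc (stepS R1 r S) = (Min (gc ` S) + Max (gc ` S)) / 2"
proof -
  define W' where "W' = \<Union>(fst ` S)"
  define C where "C = coord W' ` S"
  have st: "stepS R1 r S = (W', (Min C + Max C)/2)" unfolding stepS2[OF r] W'_def C_def ..
  have Wsub: "W' \<subseteq> {m1, m2}" and Wne: "W' \<noteq> {}" using S unfolding W'_def good_st_def by auto
  have Wfin: "finite W'" using Wsub by (rule finite_subset) simp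
  have finG: "finite (gc ` S)" "gc ` S \<noteq> {}" using S by auto
  have b01: "\<forall>g\<in>gc ` S. 0 \<le> g \<and> g \<le> 1" using S(3) unfolding good_st_def by blast
  have G01: "0 \<le> Min (gc ` S)" "Max (gc ` S) \<le> 1" unfolding Min_ge_iff[OF finG] Max_le_iff[OF finG] using b01 by auto
  show ?thesis
  proof (cases "2 \<le> card W'")
    case True
    have "card W' \<le> card {m1, m2}" using Wsub by (intro card_mono) auto
    then have ne: "m1 \<noteq> m2" using True by (cases "m1 = m2") auto
    have W: "W' = {m1, m2}"
    proof (rule ccontr)
      assume "W' \<noteq> {m1, m2}"
      then have "W' \<subset> {m1, m2}" using Wsub by blast
      then have "card W' < card {m1, m2}" by (intro psubset_card_mono) auto
      then show False using True ne by simp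
    qed
    have minW: "Min W' = m1" using W m12 by simp
    have "coord W' s = gc s" if "s \<in> S" for s unfolding coord_def gc_def minW by simp
    then have CG: "C = gc ` S" unfolding C_def by auto
    have g: "gc (stepS R1 r S) = (Min (gc ` S) + Max (gc ` S))/2" using st True CG unfolding gc_def by simp
    moreover have "fst (stepS R1 r S) = W'" using st by simp
    moreover have "Min (gc ` S) \<le> Max (gc ` S)" using Min_le[OF finG(1) Max_in[OF finG]] .
    ultimately show ?thesis using G01 Wsub Wne unfolding good_st_def by auto
  next
    case False
    then have "card W' = 1" using Wne Wfin by (cases "card W'") auto
    then obtain w where W: "W' = {w}" using card_1_singletonE by blast
    have fs: "fst s = {w}" if "s \<in> S" for s
    proof -
      have "fst s \<subseteq> W'" using that unfolding W'_def by blast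
      moreover have "fst s \<noteq> {}" using S(3) that unfolding good_st_def by blast
      ultimately show ?thesis using W by (simp add: subset_singleton_iff)
    qed
    define \<gamma> where "\<gamma> = (if w = m1 then 0 else (1::real))"
    have "gc s = \<gamma>" if "s \<in> S" for s using fs[OF that] unfolding gc_def \<gamma>_def by simp
    then have GS: "gc ` S = {\<gamma>}" using S by auto
    have "gc (stepS R1 r S) = \<gamma>" using st W unfolding gc_def \<gamma>_def by simp
    moreover have "fst (stepS R1 r S) = W'" using st by simp
    moreover have "0 \<le> \<gamma>" "\<gamma> \<le> 1" unfolding \<gamma>_def by auto
    ultimately show ?thesis using GS Wsub Wne unfolding good_st_def by simp
  qed
qed

lemma ph2: "\<exists>L. \<forall>j<n. good_st (st (R1 + s) j) \<and> L \<le> gc (st (R1 + s) j) \<and> gc (st (R1 + s) j) \<le> L + 1 / 2 ^ s"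
proof (induction s)
  case 0
  have "good_st (st R1 j) \<and> 0 \<le> gc (st R1 j) \<and> gc (st R1 j) \<le> 0 + 1 / 2 ^ 0" if "j < n" for j
  proof -
    have "st R1 j = ({val R1 j}, 0)" using ph1[of R1 j] that by auto
    moreover have "val R1 j \<in> {m1, m2}" using val_two[of R1 j] qR by auto
    ultimately show ?thesis unfolding good_st_def gc_def by auto
  qed
  then show ?case by (intro exI[of _ 0]) auto
next
  case (Suc s)
  then obtain L where L: "\<forall>j<n. good_st (st (R1 + s) j) \<and> L \<le> gc (st (R1 + s) j) \<and> gc (st (R1 + s) j) \<le> L + 1 / 2 ^ s" by blast
  obtain c0 where c0: "c0 < n" "crash c0 = None" using ex_correct by blast
  define g0 where "g0 = gc (st (R1 + s) c0)"
  have "good_st (st (R1 + Suc s) j) \<and> (L + g0)/2 \<le> gc (st (R1 + Suc s) j) \<and> gc (st (R1 + Suc s) j) \<le> (L + g0)/2 + 1 / 2 ^ Suc s"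
    if j: "j < n" for j
  proof -
    let ?S = "st (R1 + s) ` Snd (R1 + s) j"
    have eq: "st (R1 + Suc s) j = stepS R1 (R1 + s) ?S" using st_Suc by simp
    have Sg: "\<forall>s'\<in>?S. good_st s'" using L Snd_sub by blast
    have fin: "finite ?S" "?S \<noteq> {}" using Snd_fin Snd_ne by auto
    note R = step2[of "R1 + s", OF _ fin Sg]
    have g0in: "g0 \<in> gc ` ?S" unfolding g0_def using Snd_corr[OF c0] by blast
    have bnd: "\<forall>g\<in>gc ` ?S. L \<le> g \<and> g \<le> L + 1 / 2 ^ s" using L Snd_sub by blast
    have "finite (gc ` ?S)" using fin by auto
    from mid_bounds[OF this g0in bnd] R eq
    have A: "good_st (st (R1 + Suc s) j)" "(L + g0)/2 \<le> gc (st (R1 + Suc s) j)"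
      "gc (st (R1 + Suc s) j) \<le> (g0 + (L + 1 / 2 ^ s))/2" by auto
    have "(g0 + (L + 1 / 2 ^ s))/2 = (L + g0) / 2 + (1::real) / 2 ^ Suc s" by (simp add: field_simps)
    then have "gc (st (R1 + Suc s) j) \<le> (L + g0) / 2 + 1 / 2 ^ Suc s" using A(3) by linarith
    then show ?thesis using A(1,2) by blast
  qed
  then show ?case by blast
qed

end



definition decf :: "'v set \<Rightarrow> ('v \<Rightarrow> 'v \<Rightarrow> bool) \<Rightarrow> ('v \<Rightarrow> nat) \<Rightarrow> nat set \<times> real \<Rightarrow> 'v" where
  "decf V E idx s = (let a = inv_into V idx (Min (fst s)); b = inv_into V idx (Max (fst s))
     in pth E a b (nat \<lfloor>snd s * real (gdist E a b)\<rfloor>))"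

context ex2 begin

definition "u = inv_into V idx m1"
definition "v = inv_into V idx m2"

lemma inv_inp: "m \<in> idx ` x ` {..<n} \<Longrightarrow> \<exists>a<n. inv_into V idx m = x a"
  using inv_into_f_f[OF inj] inp by fastforce

lemma uv: "\<exists>a<n. u = x a" "\<exists>b<n. v = x b" "u \<in> V" "v \<in> V"
  using inv_inp[OF m_inputs(1)] inv_inp[OF m_inputs(2)] inp unfolding u_def v_def by auto

lemma pth_self: "w \<in> V \<Longrightarrow> pth E w w 0 = w"
  using pth_props[OF G, of w w] gdist_self[of E w] by simp

lemma two_card: assumes "good_st s" "2 \<le> card (fst s)" shows "fst s = {m1, m2} \<and> m1 < m2"
proof -
  have Wsub: "fst s \<subseteq> {m1, m2}" using assms unfolding good_st_def by auto
  have "card (fst s) \<le> card {m1, m2}" using Wsub by (intro card_mono) auto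
  then have ne: "m1 \<noteq> m2" using assms(2) by (cases "m1 = m2") auto
  have "fst s = {m1, m2}"
  proof (rule ccontr)
    assume "fst s \<noteq> {m1, m2}"
    then have "fst s \<subset> {m1, m2}" using Wsub by blast
    then have "card (fst s) < card {m1, m2}" by (intro psubset_card_mono) auto
    then show False using assms(2) ne by simp
  qed
  then show ?thesis using ne m12 by auto
qed

lemma out: assumes gs: "good_st s" shows "decf V E idx s = pth E u v (nat \<lfloor>gc s * real (gdist E u v)\<rfloor>)"
proof (cases "2 \<le> card (fst s)")
  case True
  from two_card[OF gs True] have "fst s = {m1, m2}" "m1 < m2" by auto
  then show ?thesis using True unfolding decf_def gc_def u_def v_def Let_def by simp
next
  case False
  have ne: "fst s \<noteq> {}" and sub: "fst s \<subseteq> {m1, m2}" using gs unfolding good_st_def by auto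
  then have "finite (fst s)" using finite_subset by blast
  then have "card (fst s) = 1" using False ne by (cases "card (fst s)") auto
  then obtain w where W: "fst s = {w}" using card_1_singletonE by blast
  have wV: "inv_into V idx w \<in> V" using W sub uv(3,4) unfolding u_def v_def by auto
  have d: "decf V E idx s = inv_into V idx w"
    unfolding decf_def Let_def W using gdist_self[of E] pth_self[OF wV] by simp
  show ?thesis
  proof (cases "w = m1")
    case True
    then have "gc s = 0" unfolding gc_def using W by simp
    then show ?thesis using d True pth_props[OF G uv(3,4)] unfolding u_def by simp
  next
    case False
    then have "w = m2" using W sub by auto
    moreover have "gc s = 1" unfolding gc_def using W False by simp
    ultimately show ?thesis using d pth_props[OF G uv(3,4)] unfolding v_def by simp
  qed
qed

lemma final:
  assumes K: "diam V E \<le> 2 ^ K"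
  defines "out \<equiv> \<lambda>i. decf V E idx (st (R1 + K) i)"
  shows "(\<forall>i. i < n \<and> crash i = None \<longrightarrow> out i \<in> V) \<and>
         (\<forall>i i'. i < n \<and> crash i = None \<longrightarrow> i' < n \<and> crash i' = None \<longrightarrow> out i = out i' \<or> E (out i) (out i')) \<and>
         (\<forall>i. i < n \<and> crash i = None \<longrightarrow> (\<exists>a<n. \<exists>b<n. on_shortest_path E (x a) (x b) (out i)))"
proof -
  obtain L where L: "\<forall>j<n. good_st (st (R1 + K) j) \<and> L \<le> gc (st (R1 + K) j) \<and> gc (st (R1 + K) j) \<le> L + 1 / 2 ^ K"
    using ph2 by blast
  define D where "D = gdist E u v"
  define k where "k j = nat \<lfloor>gc (st (R1 + K) j) * real D\<rfloor>" for j
  have o: "out j = pth E u v (k j)" if "j < n" for j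
    using out L that unfolding out_def k_def D_def by auto
  have kD: "k j \<le> D" if "j < n" for j
  proof -
    have "gc (st (R1 + K) j) \<le> 1" "0 \<le> gc (st (R1 + K) j)" using L that unfolding good_st_def by auto
    then have "gc (st (R1 + K) j) * real D \<le> real D" by (intro mult_left_le_one_le) auto
    then have "\<lfloor>gc (st (R1 + K) j) * real D\<rfloor> \<le> int D" by linarith
    then show ?thesis unfolding k_def by linarith
  qed
  have DK: "real D \<le> 2 ^ K" using diam_ge[OF G uv(3,4)] K unfolding D_def
    by (metis of_nat_le_iff of_nat_numeral of_nat_power order_trans)
  have close: "k i \<le> k i' + 1" if "i < n" "i' < n" for i i'
  proof -
    let ?a = "gc (st (R1 + K) i)" and ?b = "gc (st (R1 + K) i')"
    have "L \<le> ?a" "?a \<le> L + 1 / 2 ^ K" "L \<le> ?b" "?b \<le> L + 1 / 2 ^ K" using L that by auto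
    then have ab: "\<bar>?a - ?b\<bar> \<le> 1 / 2 ^ K" by (simp add: abs_le_iff)
    have "?a * real D - ?b * real D = (?a - ?b) * real D" by (rule left_diff_distrib[symmetric])
    then have "\<bar>?a * real D - ?b * real D\<bar> = \<bar>?a - ?b\<bar> * real D" by (simp only: abs_mult abs_of_nat)
    also have "\<dots> \<le> (1 / 2 ^ K) * 2 ^ K" using ab DK by (intro mult_mono) auto
    also have "\<dots> = 1" by simp
    finally have "\<bar>?a * real D - ?b * real D\<bar> \<le> 1" .
    moreover have "0 \<le> ?a" "0 \<le> ?b" using L that unfolding good_st_def by auto
    ultimately show ?thesis unfolding k_def by (intro floor_close) auto
  qed
  have kg: "k j \<le> gdist E u v" if "j < n" for j using kD[OF that] unfolding D_def .
  have oi: "out j = pth E u v (k j)" if "j < n" for j using o[OF that] .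
  show ?thesis
  proof (intro conjI allI impI)
    fix i assume i: "i < n \<and> crash i = None"
    then have ii: "i < n" by simp
    show "out i \<in> V" unfolding oi[OF ii] by (rule pth_in_V[OF G uv(3,4) kg[OF ii]])
    obtain a b where ab: "a < n" "b < n" "u = x a" "v = x b" using uv by blast
    have "on_shortest_path E u v (out i)" unfolding on_shortest_path_def oi[OF ii]
      by (rule pth_short[OF G uv(3,4) kg[OF ii]])
    then have "on_shortest_path E (x a) (x b) (out i)" using ab(3,4) by simp
    then show "\<exists>a<n. \<exists>b<n. on_shortest_path E (x a) (x b) (out i)" using ab(1,2) by blast
  next
    fix i i' assume i: "i < n \<and> crash i = None" and i': "i' < n \<and> crash i' = None"
    then have ii: "i < n" "i' < n" by simp_all
    show "out i = out i' \<or> E (out i) (out i')"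
      unfolding oi[OF ii(1)] oi[OF ii(2)]
      by (rule pth_adj[OF G uv(3,4) kg[OF ii(1)] kg[OF ii(2)] close[OF ii] close[OF ii(2) ii(1)]])
  qed
qed

end



theorem mainTheorem8:
  fixes V :: "'v set" and E :: "'v \<Rightarrow> 'v \<Rightarrow> bool" and n f :: nat
  assumes "finite_connected_graph V E"
    and "f < n"
  shows "\<exists>dec. solves_GAA V E n f (f div 2 + clog2 (diam V E) + 1) dec"
proof -
  have "finite V" using assms(1) unfolding finite_connected_graph_def by blast
  then obtain idx :: "'v \<Rightarrow> nat" and N where "idx ` V = {i. i < N}" and inj: "inj_on idx V"
    using finite_imp_inj_to_nat_seg by blast
  define K where "K = clog2 (diam V E)"
  define dec where "dec = (\<lambda>w. decf V E idx (run idx (f div 2 + 1) w))"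
  have T: "f div 2 + clog2 (diam V E) + 1 = (f div 2 + 1) + K" unfolding K_def by simp
  have "solves_GAA V E n f (f div 2 + clog2 (diam V E) + 1) dec"
    unfolding solves_GAA_def Let_def T
  proof (intro allI impI)
    fix x :: "nat \<Rightarrow> 'v" and crash :: "nat \<Rightarrow> nat option" and dlv :: "nat \<Rightarrow> nat \<Rightarrow> bool"
    assume H: "(\<forall>j<n. x j \<in> V) \<and> card {j. j < n \<and> crash j \<noteq> None} \<le> f"
    interpret ex V E n f x crash dlv idx using assms H inj by unfold_locales auto
    obtain q p where qp: "q < R1" "p < n" "{j. j < n \<and> crash j = Some (Suc q)} \<subseteq> {p}"
      using good_round by blast
    interpret ex2 V E n f x crash dlv idx q p using qp by unfold_locales auto
    have o: "dec (view_at n x crash dlv (f div 2 + 1 + K) i) = decf V E idx (st (R1 + K) i)" for i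
      unfolding dec_def st_def R1_def ..
    have F: "diam V E \<le> 2 ^ K" unfolding K_def by (rule clog2_ge)
    note fin = final[OF F]
    show "(\<forall>i\<in>{i. i < n \<and> crash i = None}. dec (view_at n x crash dlv (f div 2 + 1 + K) i) \<in> V) \<and>
          (\<forall>i\<in>{i. i < n \<and> crash i = None}. \<forall>i'\<in>{i. i < n \<and> crash i = None}.
              dec (view_at n x crash dlv (f div 2 + 1 + K) i) = dec (view_at n x crash dlv (f div 2 + 1 + K) i') \<or>
              E (dec (view_at n x crash dlv (f div 2 + 1 + K) i)) (dec (view_at n x crash dlv (f div 2 + 1 + K) i'))) \<and>
          (\<forall>i\<in>{i. i < n \<and> crash i = None}. \<exists>a<n. \<exists>b<n. on_shortest_path E (x a) (x b) (dec (view_at n x crash dlv (f div 2 + 1 + K) i)))"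
      unfolding o using fin by blast
  qed
  then show ?thesis by blast
qed


end
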